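(* Let $N=\begin{pmatrix}0&1&0\\0&0&1\\0&0&0\end{pmatrix}$, $\xi=(x,y,z)^T$, $\beta=2zx-y^2$, and $d\ge1$. The space $\ker(\mathrm{ad}_{N^*})\cap U^3_d$ equals $\{\theta\,\xi:\ \theta=\theta(x,\beta)\in P^3_{d-1}\}$, i.e. the vector fields $\theta\xi$ with $\theta$ a homogeneous degree-$(d-1)$ polynomial in $\xi$ that is a polynomial in $x$ and $\beta$. This space has dimension $\lceil d/2\rceil$.
   Context: $P^3_k$ is the space of real homogeneous polynomials of degree $k$ on $\mathbb{R}^3$; $U^3_d=\{\theta(\xi)\xi:\theta\in P^3_{d-1}\}$. $\mathrm{ad}_A h(\xi)=Dh(\xi)A\xi-Ah(\xi)$, $N^*=N^T$; $\ker\mathrm{ad}_{N^*}$ is the orthogonal complement of $\mathrm{rng}\,\mathrm{ad}_N$ with respect to the inner product $\langle p,q\rangle=\sum_i p_i(\partial_\xi)q_i(\xi)|_{\xi=0}$. *)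

theory Defs
  imports "HOL-Analysis.Analysis" "HOL-Library.Function_Algebras"
begin

text \<open>Coordinates: for xi :: real^3, x = xi$1, y = xi$2, z = xi$3.\<close>

definition hpoly :: "nat \<Rightarrow> (real^3 \<Rightarrow> real) set" where
  "hpoly k = {f. \<exists>c :: nat \<Rightarrow> nat \<Rightarrow> real. \<forall>\<xi>.
      f \<xi> = (\<Sum>(i,j)\<in>{(i,j). i + j \<le> k}.
                c i j * (\<xi>$1)^i * (\<xi>$2)^j * (\<xi>$3)^(k - i - j))}"

definition U3 :: "nat \<Rightarrow> (real^3 \<Rightarrow> real^3) set" where
  "U3 d = {h. \<exists>\<theta>\<in>hpoly (d - 1). h = (\<lambda>\<xi>. \<theta> \<xi> *\<^sub>R \<xi>)}"

definition ad :: "real^3^3 \<Rightarrow> (real^3 \<Rightarrow> real^3) \<Rightarrow> (real^3 \<Rightarrow> real^3)" where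
  "ad A h = (\<lambda>\<xi>. frechet_derivative h (at \<xi>) (A *v \<xi>) - A *v h \<xi>)"

definition Nmat :: "real^3^3" where
  "Nmat = (\<chi> i j. if (i = 1 \<and> j = 2) \<or> (i = 2 \<and> j = 3) then 1 else 0)"

definition beta :: "real^3 \<Rightarrow> real" where
  "beta \<xi> = 2 * (\<xi>$3) * (\<xi>$1) - (\<xi>$2)^2"

definition vf_scale :: "real \<Rightarrow> (real^3 \<Rightarrow> real^3) \<Rightarrow> (real^3 \<Rightarrow> real^3)" where
  "vf_scale c h = (\<lambda>\<xi>. c *\<^sub>R h \<xi>)"

end

theory Submission imports Defs begin

lemma NT1[simp]: "(transpose Nmat *v x)$1 = 0"
  and NT2[simp]: "(transpose Nmat *v x)$2 = x$1"
  and NT3[simp]: "(transpose Nmat *v x)$3 = x$2"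
  by (simp_all add: matrix_vector_mult_def transpose_def Nmat_def sum_3)

lemma VN1[simp]: "(x v* Nmat)$1 = 0"
  and VN2[simp]: "(x v* Nmat)$2 = x$1"
  and VN3[simp]: "(x v* Nmat)$3 = x$2"
  by (simp_all add: vector_matrix_mult_def Nmat_def sum_3)

lemma hpoly_eq: "\<theta> \<in> hpoly k \<Longrightarrow> \<exists>c. \<theta> = (\<lambda>\<xi>. \<Sum>(i,j)\<in>{(i,j). i + j \<le> k}.
                c i j * (\<xi>$1)^i * (\<xi>$2)^j * (\<xi>$3)^(k - i - j))"
  unfolding hpoly_def by auto

lemma fin_S: "finite {(i::nat,j::nat). i + j \<le> k}"
  by (rule finite_subset[of _ "{..k}\<times>{..k}"]) auto

declare fin_S[simp]

lemma hpoly_diff: "\<theta> \<in> hpoly k \<Longrightarrow> \<theta> differentiable (at \<xi>)"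
proof -
  assume "\<theta> \<in> hpoly k"
  then obtain c where c: "\<theta> = (\<lambda>\<xi>. \<Sum>(i,j)\<in>{(i,j). i + j \<le> k}.
                c i j * (\<xi>$1)^i * (\<xi>$2)^j * (\<xi>$3)^(k - i - j))" using hpoly_eq by blast
  have l: "\<And>m. (\<lambda>\<xi>::real^3. \<xi>$m) differentiable (at \<xi>)"
    by (simp add: bounded_linear_imp_differentiable bounded_linear_vec_nth)
  show ?thesis unfolding c
    by (intro differentiable_sum ballI, auto simp: case_prod_beta intro!: differentiable_mult differentiable_power l)
qed


lemma ad_theta:
  assumes d: "\<And>\<xi>. \<theta> differentiable (at \<xi>)"
  shows "ad A (\<lambda>\<xi>. \<theta> \<xi> *\<^sub>R \<xi>) = (\<lambda>\<xi>. frechet_derivative \<theta> (at \<xi>) (A *v \<xi>) *\<^sub>R \<xi>)"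
proof
  fix \<xi> :: "real^3"
  have "((\<lambda>\<xi>. \<theta> \<xi> *\<^sub>R \<xi>) has_derivative
      (\<lambda>v. \<theta> \<xi> *\<^sub>R v + frechet_derivative \<theta> (at \<xi>) v *\<^sub>R \<xi>)) (at \<xi>)"
    using has_derivative_scaleR[OF frechet_derivative_works[THEN iffD1, OF d] has_derivative_ident] by simp
  from frechet_derivative_at[OF this, symmetric] show "ad A (\<lambda>\<xi>. \<theta> \<xi> *\<^sub>R \<xi>) \<xi> = frechet_derivative \<theta> (at \<xi>) (A *v \<xi>) *\<^sub>R \<xi>"
    unfolding ad_def by (simp add: matrix_vector_mult_scaleR)
qed

lemma ad_zero_iff:
  assumes d: "\<And>\<xi>. \<theta> differentiable (at \<xi>)"
  shows "ad A (\<lambda>\<xi>. \<theta> \<xi> *\<^sub>R \<xi>) = (\<lambda>_. 0) \<longleftrightarrow> (\<forall>\<xi>. frechet_derivative \<theta> (at \<xi>) (A *v \<xi>) = 0)"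
proof -
  have lin: "linear (frechet_derivative \<theta> (at \<xi>))" for \<xi>
    using d frechet_derivative_works has_derivative_linear by blast
  show ?thesis unfolding ad_theta[OF d] fun_eq_iff
  proof (intro iffI allI)
    fix \<xi> :: "real^3"
    assume h: "\<forall>x. frechet_derivative \<theta> (at x) (A *v x) *\<^sub>R x = 0"
    show "frechet_derivative \<theta> (at \<xi>) (A *v \<xi>) = 0"
    proof (cases "\<xi> = 0")
      case True then show ?thesis using linear_0[OF lin] by simp
    next
      case False then show ?thesis using h by auto
    qed
  qed simp
qed



lemma poly2_deriv:
  fixes f g :: "real^3 \<Rightarrow> real" and a :: "nat \<Rightarrow> nat \<Rightarrow> real"
  assumes f: "(f has_derivative f') (at \<xi>)" and g: "(g has_derivative g') (at \<xi>)"
  shows "((\<lambda>\<xi>. \<Sum>i\<le>M. \<Sum>j\<le>M. a i j * f \<xi>^i * g \<xi>^j) has_derivative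
     (\<lambda>v. \<Sum>i\<le>M. \<Sum>j\<le>M. a i j * (of_nat i * f' v * f \<xi>^(i-1) * g \<xi>^j
          + f \<xi>^i * (of_nat j * g' v * g \<xi>^(j-1))))) (at \<xi>)"
proof (intro has_derivative_sum)
  fix i j
  show "((\<lambda>\<xi>. a i j * f \<xi>^i * g \<xi>^j) has_derivative (\<lambda>v. a i j * (of_nat i * f' v * f \<xi>^(i-1) * g \<xi>^j
          + f \<xi>^i * (of_nat j * g' v * g \<xi>^(j-1))))) (at \<xi>)"
    by (rule derivative_eq_intros f g refl)+ (simp add: fun_eq_iff algebra_simps)
qed



lemma nth_deriv: "((\<lambda>\<xi>::real^3. \<xi>$m) has_derivative (\<lambda>v. v$m)) (at \<xi>)"
  by (simp add: bounded_linear_imp_has_derivative bounded_linear_vec_nth)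

lemma beta_deriv: "(beta has_derivative (\<lambda>v. 2 * v$3 * \<xi>$1 + 2 * \<xi>$3 * v$1 - 2 * \<xi>$2 * v$2)) (at \<xi>)"
  unfolding beta_def[abs_def]
  by (rule derivative_eq_intros nth_deriv refl)+ (simp add: fun_eq_iff algebra_simps)

lemma rhs_kernel:
  assumes "\<forall>\<xi>. \<theta> \<xi> = (\<Sum>i\<le>M. \<Sum>j\<le>M. a i j * (\<xi>$1)^i * (beta \<xi>)^j)"
  shows "frechet_derivative \<theta> (at \<xi>) (transpose Nmat *v \<xi>) = 0"
proof -
  have e: "\<theta> = (\<lambda>\<xi>. \<Sum>i\<le>M. \<Sum>j\<le>M. a i j * (\<xi>$1)^i * (beta \<xi>)^j)" using assms by auto
  show ?thesis unfolding e
    by (subst frechet_derivative_at[OF poly2_deriv[OF nth_deriv beta_deriv], symmetric]) simp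
qed


lemma NNN: "transpose Nmat *v (transpose Nmat *v (transpose Nmat *v \<xi>)) = 0"
  by (simp add: vec_eq_iff forall_3 del: transpose_matrix_vector)

lemma invariance:
  fixes \<theta> :: "real^3 \<Rightarrow> real"
  assumes d: "\<And>\<xi>. \<theta> differentiable (at \<xi>)"
    and k: "\<forall>\<xi>. frechet_derivative \<theta> (at \<xi>) (transpose Nmat *v \<xi>) = 0"
  shows "\<theta> (\<xi> + t *\<^sub>R (transpose Nmat *v \<xi>) + (t^2/2) *\<^sub>R (transpose Nmat *v (transpose Nmat *v \<xi>))) = \<theta> \<xi>"
proof -
  let ?A = "transpose Nmat"
  define \<phi> where "\<phi> t = \<xi> + t *\<^sub>R (?A *v \<xi>) + (t^2/2) *\<^sub>R (?A *v (?A *v \<xi>))" for t :: real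
  have lin: "linear (frechet_derivative \<theta> (at \<xi>))" for \<xi>
    using d frechet_derivative_works has_derivative_linear by blast
  have Aphi: "?A *v \<phi> t = ?A *v \<xi> + t *\<^sub>R (?A *v (?A *v \<xi>))" for t
    unfolding \<phi>_def by (simp add: matrix_vector_right_distrib matrix_vector_mult_scaleR NNN del: transpose_matrix_vector)
  have dphi0: "(\<phi> has_derivative (\<lambda>h. h *\<^sub>R (?A *v \<xi> + t *\<^sub>R (?A *v (?A *v \<xi>))))) (at t)" for t
    unfolding \<phi>_def
    by (auto intro!: derivative_eq_intros simp: fun_eq_iff algebra_simps power2_eq_square simp del: transpose_matrix_vector)
  have dphi: "(\<phi> has_derivative (\<lambda>h. h *\<^sub>R (?A *v \<phi> t))) (at t)" for t
    using dphi0[of t] by (simp only: Aphi)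
  have "DERIV (\<theta> \<circ> \<phi>) t :> 0" for t
  proof -
    have "((\<theta> \<circ> \<phi>) has_derivative (frechet_derivative \<theta> (at (\<phi> t)) \<circ> (\<lambda>h. h *\<^sub>R (?A *v \<phi> t)))) (at t)"
      by (rule diff_chain_at[OF dphi]) (use d frechet_derivative_works in blast)
    moreover have "(frechet_derivative \<theta> (at (\<phi> t)) \<circ> (\<lambda>h. h *\<^sub>R (?A *v \<phi> t))) = (\<lambda>h. h * 0)"
      using linear_scale[OF lin] k by (auto simp: fun_eq_iff)
    ultimately have "((\<theta> \<circ> \<phi>) has_derivative (\<lambda>h. 0)) (at t)" by simp
    moreover have z: "((*) (0::real)) = (\<lambda>h. 0)" by auto
    ultimately show ?thesis unfolding has_field_derivative_def z by blast
  qed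
  then have "(\<theta> \<circ> \<phi>) t = (\<theta> \<circ> \<phi>) 0" by (intro DERIV_isconst_all[of "\<theta> \<circ> \<phi>"]) auto
  then show ?thesis by (simp add: \<phi>_def)
qed


lemma sum_y0:
  fixes a b :: real
  shows "(\<Sum>(i,j)\<in>{(i,j). i + j \<le> k}. c i j * a^i * 0^j * b^(k - i - j))
       = (\<Sum>i\<le>k. c i 0 * a^i * b^(k - i))"
proof -
  have "(\<Sum>(i,j)\<in>{(i,j). i + j \<le> k}. c i j * a^i * 0^j * b^(k - i - j))
      = (\<Sum>(i,j)\<in>(\<lambda>i. (i,0)) ` {..k}. c i j * a^i * 0^j * b^(k - i - j))"
    by (rule sum.mono_neutral_right) auto
  also have "\<dots> = (\<Sum>i\<le>k. c i 0 * a^i * b^(k - i))"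
    by (subst sum.reindex) (auto simp: inj_on_def)
  finally show ?thesis .
qed

lemma orbit:
  fixes \<theta> :: "real^3 \<Rightarrow> real"
  assumes c: "\<theta> = (\<lambda>\<xi>. \<Sum>(i,j)\<in>{(i,j). i + j \<le> k}.
                c i j * (\<xi>$1)^i * (\<xi>$2)^j * (\<xi>$3)^(k - i - j))"
    and k: "\<forall>\<xi>. frechet_derivative \<theta> (at \<xi>) (transpose Nmat *v \<xi>) = 0"
    and x: "\<xi>$1 \<noteq> 0"
  shows "\<theta> \<xi> = (\<Sum>i\<le>k. c i 0 * (\<xi>$1)^i * (beta \<xi> / (2 * \<xi>$1))^(k - i))"
proof -
  have hp: "\<theta> \<in> hpoly k" unfolding hpoly_def c by auto
  define t where "t = - \<xi>$2 / \<xi>$1"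
  define \<psi> where "\<psi> = \<xi> + t *\<^sub>R (transpose Nmat *v \<xi>) + (t^2/2) *\<^sub>R (transpose Nmat *v (transpose Nmat *v \<xi>))"
  have "\<theta> \<psi> = \<theta> \<xi>" unfolding \<psi>_def by (rule invariance[OF hpoly_diff[OF hp] k])
  moreover have "\<psi>$1 = \<xi>$1" "\<psi>$2 = 0" "\<psi>$3 = beta \<xi> / (2 * \<xi>$1)"
    using x unfolding \<psi>_def t_def beta_def
    by (simp_all del: transpose_matrix_vector add: field_simps power2_eq_square)
  ultimately show ?thesis unfolding c using sum_y0 by (metis (no_types))
qed


lemma coef_sum_shift:
  fixes C :: "'a \<Rightarrow> real" and e :: "'a \<Rightarrow> nat"
  assumes "finite I" "\<And>t. t \<in> I \<Longrightarrow> e t \<le> n"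
  shows "(\<Sum>m\<le>n. (\<Sum>t\<in>I. if e t = m then C t else 0) * x^m) = (\<Sum>t\<in>I. C t * x^(e t))"
proof -
  have "(\<Sum>m\<le>n. (\<Sum>t\<in>I. if e t = m then C t else 0) * x^m) = (\<Sum>m\<le>n. \<Sum>t\<in>I. if e t = m then C t * x^m else 0)"
    by (auto simp: sum_distrib_right intro!: sum.cong)
  also have "\<dots> = (\<Sum>t\<in>I. \<Sum>m\<le>n. if e t = m then C t * x^m else 0)" by (rule sum.swap)
  also have "\<dots> = (\<Sum>t\<in>I. C t * x^(e t))"
    using assms(2) by (intro sum.cong refl) (simp add: sum.delta)
  finally show ?thesis .
qed

lemma coef_zero:
  fixes \<theta> :: "real^3 \<Rightarrow> real"
  assumes c: "\<theta> = (\<lambda>\<xi>. \<Sum>(i,j)\<in>{(i,j). i + j \<le> k}.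
                c i j * (\<xi>$1)^i * (\<xi>$2)^j * (\<xi>$3)^(k - i - j))"
    and k: "\<forall>\<xi>. frechet_derivative \<theta> (at \<xi>) (transpose Nmat *v \<xi>) = 0"
    and i: "2 * i0 < k"
  shows "c i0 0 = 0"
proof -
  define A where "A m = (\<Sum>(i,j)\<in>{(i,j). i + j \<le> k}. if i + k = m then c i j * 0^(k-i-j) else 0)" for m
  define B where "B m = (\<Sum>i\<le>k. if 2*i = m then c i 0 * (-1/2)^(k-i) else 0)" for m
  have Aeq: "(\<Sum>m\<le>2*k. A m * x^m) = (\<Sum>(i,j)\<in>{(i,j). i + j \<le> k}. c i j * 0^(k-i-j) * x^(i+k))" for x :: real
    unfolding A_def case_prod_beta
    by (rule coef_sum_shift[where e="\<lambda>t. fst t + k" and C="\<lambda>t. c (fst t) (snd t) * 0^(k - fst t - snd t)"]) (auto intro: finite_subset[of _ "{..k}\<times>{..k}"])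
  have Beq: "(\<Sum>m\<le>2*k. B m * x^m) = (\<Sum>i\<le>k. c i 0 * (-1/2)^(k-i) * x^(2*i))" for x :: real
    unfolding B_def
    by (rule coef_sum_shift[where e="\<lambda>i. 2*i"]) auto
  have AB: "(\<Sum>m\<le>2*k. A m * x^m) = (\<Sum>m\<le>2*k. B m * x^m)" if x: "x \<noteq> 0" for x :: real
  proof -
    define \<xi> :: "real^3" where "\<xi> = (\<chi> i. if i = 1 then x else if i = 2 then 1 else 0)"
    have v: "\<xi>$1 = x" "\<xi>$2 = 1" "\<xi>$3 = 0" "beta \<xi> = -1" unfolding \<xi>_def beta_def by simp_all
    have "\<theta> \<xi> = (\<Sum>i\<le>k. c i 0 * x^i * (-1 / (2 * x))^(k - i))"
      using orbit[OF c k, of \<xi>] v x by simp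
    moreover have "\<theta> \<xi> = (\<Sum>(i,j)\<in>{(i,j). i + j \<le> k}. c i j * x^i * 0^(k - i - j))"
      unfolding c using v by simp
    ultimately have e: "(\<Sum>(i,j)\<in>{(i,j). i + j \<le> k}. c i j * x^i * 0^(k - i - j))
       = (\<Sum>i\<le>k. c i 0 * x^i * (-1 / (2 * x))^(k - i))" by simp
    have "(\<Sum>m\<le>2*k. A m * x^m) = x^k * (\<Sum>(i,j)\<in>{(i,j). i + j \<le> k}. c i j * x^i * 0^(k - i - j))"
      unfolding Aeq by (simp add: sum_distrib_left case_prod_beta power_add algebra_simps)
    also have "\<dots> = (\<Sum>i\<le>k. c i 0 * x^i * (x^k * (-1 / (2 * x))^(k - i)))"
      unfolding e by (simp add: sum_distrib_left algebra_simps)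
    also have "\<dots> = (\<Sum>i\<le>k. c i 0 * (-1/2)^(k-i) * x^(2*i))"
    proof (rule sum.cong[OF refl])
      fix i assume "i \<in> {..k}"
      then have 1: "x^k = x^(k-i) * x^i" by (simp add: power_add[symmetric])
      have a: "x * (-1/(2*x)) = -1/2" using x by (simp add: field_simps)
      then have 2: "x^(k-i) * (-1/(2*x))^(k-i) = (-1/2)^(k-i)" by (metis power_mult_distrib)
      have 3: "x^(2*i) = x^i * x^i" by (simp add: mult_2 power_add)
      show "c i 0 * x^i * (x^k * (-1 / (2 * x))^(k - i)) = c i 0 * (-1/2)^(k-i) * x^(2*i)"
        unfolding 1 3 using 2 by (simp add: algebra_simps)
    qed
    also have "\<dots> = (\<Sum>m\<le>2*k. B m * x^m)" unfolding Beq ..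
    finally show ?thesis .
  qed
  have "UNIV - {0} \<subseteq> {x::real. (\<Sum>m\<le>2*k. (A m - B m) * x^m) = 0}"
  proof (intro subsetI CollectI)
    fix x :: real assume "x \<in> UNIV - {0}"
    then have "(\<Sum>m\<le>2*k. A m * x^m) = (\<Sum>m\<le>2*k. B m * x^m)" using AB by blast
    then show "(\<Sum>m\<le>2*k. (A m - B m) * x^m) = 0" by (simp only: left_diff_distrib sum_subtractf)
  qed
  moreover have "infinite (UNIV - {0::real})" by (simp add: infinite_UNIV_char_0)
  ultimately have "infinite {x::real. (\<Sum>m\<le>2*k. (A m - B m) * x^m) = 0}"
    using finite_subset by blast
  then have "\<not> (\<exists>m. m \<le> 2*k \<and> A m - B m \<noteq> 0)"
    using polyfun_finite_roots[of "\<lambda>m. A m - B m" "2*k"] by simp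
  then have "\<forall>m\<le>2*k. A m - B m = 0" by blast
  then have "A (2*i0) = B (2*i0)" using i by auto
  moreover have "A (2*i0) = 0" unfolding A_def using i
    by (auto simp: case_prod_beta intro!: sum.neutral)
  moreover have "B (2*i0) = c i0 0 * (-1/2)^(k-i0)" unfolding B_def using i
    by (simp add: sum.delta)
  ultimately show ?thesis by simp
qed


lemma form_conv:
  fixes X B :: real
  shows "(\<Sum>p\<le>k. \<Sum>q\<le>k. (if p + 2*q = k then \<alpha> q else 0) * X^p * B^q)
       = (\<Sum>q\<le>k. if 2*q \<le> k then \<alpha> q * X^(k-2*q) * B^q else 0)"
proof -
  have "(\<Sum>p\<le>k. \<Sum>q\<le>k. (if p + 2*q = k then \<alpha> q else 0) * X^p * B^q)
      = (\<Sum>q\<le>k. \<Sum>p\<le>k. (if p + 2*q = k then \<alpha> q else 0) * X^p * B^q)"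
    by (rule sum.swap)
  also have "\<dots> = (\<Sum>q\<le>k. if 2*q \<le> k then \<alpha> q * X^(k-2*q) * B^q else 0)"
  proof (rule sum.cong[OF refl])
    fix q
    have "(\<Sum>p\<le>k. (if p + 2*q = k then \<alpha> q else 0) * X^p * B^q)
        = (\<Sum>p\<le>k. if p = k - 2*q then (if 2*q \<le> k then \<alpha> q * X^p * B^q else 0) else 0)"
      by (rule sum.cong) auto
    also have "\<dots> = (if 2*q \<le> k then \<alpha> q * X^(k-2*q) * B^q else 0)"
      by (subst sum.delta) auto
    finally show "(\<Sum>p\<le>k. (if p + 2*q = k then \<alpha> q else 0) * X^p * B^q)
        = (if 2*q \<le> k then \<alpha> q * X^(k-2*q) * B^q else 0)" .
  qed
  finally show ?thesis .
qed

lemma alpha_form_nz: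
  fixes \<theta> :: "real^3 \<Rightarrow> real"
  assumes c: "\<theta> = (\<lambda>\<xi>. \<Sum>(i,j)\<in>{(i,j). i + j \<le> k}.
                c i j * (\<xi>$1)^i * (\<xi>$2)^j * (\<xi>$3)^(k - i - j))"
    and k: "\<forall>\<xi>. frechet_derivative \<theta> (at \<xi>) (transpose Nmat *v \<xi>) = 0"
    and x: "\<xi>$1 \<noteq> 0"
  shows "\<theta> \<xi> = (\<Sum>q\<le>k. if 2*q \<le> k then c (k-q) 0 / 2^q * (\<xi>$1)^(k-2*q) * (beta \<xi>)^q else 0)"
proof -
  let ?X = "\<xi>$1" and ?B = "beta \<xi>"
  have "\<theta> \<xi> = (\<Sum>i\<le>k. c i 0 * ?X^i * (?B / (2 * ?X))^(k - i))" by (rule orbit[OF c k x])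
  also have "\<dots> = (\<Sum>q\<le>k. c (k-q) 0 * ?X^(k-q) * (?B / (2 * ?X))^(k - (k-q)))"
    unfolding atMost_atLeast0 by (subst sum.atLeastAtMost_rev) simp
  also have "\<dots> = (\<Sum>q\<le>k. if 2*q \<le> k then c (k-q) 0 / 2^q * ?X^(k-2*q) * ?B^q else 0)"
  proof (rule sum.cong[OF refl])
    fix q assume q: "q \<in> {..k}"
    show "c (k-q) 0 * ?X^(k-q) * (?B / (2 * ?X))^(k - (k-q)) = (if 2*q \<le> k then c (k-q) 0 / 2^q * ?X^(k-2*q) * ?B^q else 0)"
    proof (cases "2*q \<le> k")
      case True
      then have 1: "?X^(k-q) = ?X^(k-2*q) * ?X^q" by (simp add: power_add[symmetric])
      show ?thesis using True q x unfolding 1 by (simp add: power_divide power_mult_distrib field_simps)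
    next
      case False
      then have "c (k-q) 0 = 0" using q by (intro coef_zero[OF c k]) auto
      then show ?thesis using False by simp
    qed
  qed
  finally show ?thesis .
qed


lemma extend_cont:
  fixes f g :: "real^3 \<Rightarrow> real"
  assumes cf: "\<And>\<xi>. isCont f \<xi>" and cg: "\<And>\<xi>. isCont g \<xi>"
    and eq: "\<And>\<xi>. \<xi>$1 \<noteq> 0 \<Longrightarrow> f \<xi> = g \<xi>"
  shows "f \<xi> = g \<xi>"
proof (cases "\<xi>$1 = 0")
  case False then show ?thesis using eq by auto
next
  case True
  define h where "h t = \<xi> + t *\<^sub>R axis 1 (1::real)" for t :: real
  have ch: "isCont h 0" unfolding h_def by (intro continuous_intros)
  have "isCont (\<lambda>t. f (h t) - g (h t)) 0"
    using isCont_o2[OF ch cf] isCont_o2[OF ch cg] by (intro continuous_intros) auto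
  then have l1: "(\<lambda>t. f (h t) - g (h t)) \<midarrow>0\<rightarrow> f (h 0) - g (h 0)" by (simp add: isCont_def)
  have "\<forall>\<^sub>F t in at 0. (\<lambda>t. f (h t) - g (h t)) t = 0"
    unfolding eventually_at_filter
    by (rule always_eventually) (auto simp: h_def True axis_def intro!: eq)
  then have l2: "(\<lambda>t. f (h t) - g (h t)) \<midarrow>0\<rightarrow> 0"
    by (rule tendsto_eventually)
  from LIM_unique[OF l1 l2] show ?thesis by (simp add: h_def)
qed

lemma alpha_form:
  fixes \<theta> :: "real^3 \<Rightarrow> real"
  assumes c: "\<theta> = (\<lambda>\<xi>. \<Sum>(i,j)\<in>{(i,j). i + j \<le> k}.
                c i j * (\<xi>$1)^i * (\<xi>$2)^j * (\<xi>$3)^(k - i - j))"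
    and k: "\<forall>\<xi>. frechet_derivative \<theta> (at \<xi>) (transpose Nmat *v \<xi>) = 0"
  shows "\<theta> \<xi> = (\<Sum>p\<le>k. \<Sum>q\<le>k. (if p + 2*q = k then c (k-q) 0 / 2^q else 0) * (\<xi>$1)^p * (beta \<xi>)^q)"
proof (rule extend_cont)
  have hp: "\<theta> \<in> hpoly k" unfolding hpoly_def c by auto
  show "isCont \<theta> \<xi>" for \<xi> using hpoly_diff[OF hp] differentiable_imp_continuous_within by blast
  show "isCont (\<lambda>\<xi>. \<Sum>p\<le>k. \<Sum>q\<le>k. (if p + 2*q = k then c (k-q) 0 / 2^q else 0) * (\<xi>$1)^p * (beta \<xi>)^q) \<xi>" for \<xi>
    by (rule differentiable_imp_continuous_within, rule differentiableI, rule poly2_deriv[OF nth_deriv[of 1] beta_deriv])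
  show "\<theta> \<xi> = (\<Sum>p\<le>k. \<Sum>q\<le>k. (if p + 2*q = k then c (k-q) 0 / 2^q else 0) * (\<xi>$1)^p * (beta \<xi>)^q)"
    if "\<xi>$1 \<noteq> 0" for \<xi>
    unfolding form_conv using alpha_form_nz[OF c k that] .
qed


lemma hpoly_mon:
  assumes k: "a + 2*q = k"
  shows "(\<lambda>\<xi>. (\<xi>$1)^a * (beta \<xi>)^q) \<in> hpoly k"
proof -
  define c where "c i j = (if a \<le> i \<and> i - a \<le> q \<and> j = 2*(q-(i-a))
      then real (q choose (i-a)) * 2^(i-a) * (-1)^(q-(i-a)) else 0)" for i j
  have "(\<xi>$1)^a * (beta \<xi>)^q = (\<Sum>(i,j)\<in>{(i,j). i + j \<le> k}.
                c i j * (\<xi>$1)^i * (\<xi>$2)^j * (\<xi>$3)^(k - i - j))" for \<xi> :: "real^3"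
  proof -
    let ?x = "\<xi>$1" and ?y = "\<xi>$2" and ?z = "\<xi>$3"
    have "(\<xi>$1)^a * (beta \<xi>)^q = ?x^a * (2*?z*?x + (-(?y^2)))^q" by (simp add: beta_def)
    also have "\<dots> = (\<Sum>r\<le>q. real (q choose r) * 2^r * (-1)^(q-r) * ?x^(a+r) * ?y^(2*(q-r)) * ?z^r)"
      unfolding binomial_ring sum_distrib_left
    proof (rule sum.cong[OF refl])
      fix r
      have e1: "(2*?z*?x)^r = 2^r * ?z^r * ?x^r" by (simp add: power_mult_distrib)
      have e2: "(-(?y^2))^(q-r) = (-1)^(q-r) * ?y^(2*(q-r))" by (subst power_minus) (simp add: power_mult)
      have e3: "?x^(a+r) = ?x^a * ?x^r" by (rule power_add)
      show "?x^a * (real (q choose r) * (2*?z*?x)^r * (-(?y^2))^(q-r)) = real (q choose r) * 2^r * (-1)^(q-r) * ?x^(a+r) * ?y^(2*(q-r)) * ?z^r"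
        unfolding e1 e2 e3 by (simp only: mult_ac)
    qed
    also have "\<dots> = (\<Sum>(i,j)\<in>(\<lambda>r. (a+r, 2*(q-r))) ` {..q}. c i j * ?x^i * ?y^j * ?z^(k - i - j))"
    proof -
      have inj: "inj_on (\<lambda>r. (a+r, 2*(q-r))) {..q}" by (auto simp: inj_on_def)
      have "c (a+r) (2*(q-r)) = real (q choose r) * 2^r * (-1)^(q-r)" for r
        by (simp add: c_def)
      moreover have "r \<le> q \<Longrightarrow> k - (a+r) - 2*(q-r) = r" for r using k by simp
      ultimately show ?thesis unfolding sum.reindex[OF inj]
        by (intro sum.cong refl) (simp add: o_def)
    qed
    also have "\<dots> = (\<Sum>(i,j)\<in>{(i,j). i + j \<le> k}. c i j * ?x^i * ?y^j * ?z^(k - i - j))"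
    proof (rule sum.mono_neutral_left)
      show "(\<lambda>r. (a+r, 2*(q-r))) ` {..q} \<subseteq> {(i,j). i + j \<le> k}" using k by auto
      show "\<forall>ij\<in>{(i,j). i + j \<le> k} - (\<lambda>r. (a+r, 2*(q-r))) ` {..q}. (case ij of (i,j) \<Rightarrow> c i j * ?x^i * ?y^j * ?z^(k - i - j)) = 0"
      proof
        fix ij assume ij: "ij \<in> {(i,j). i + j \<le> k} - (\<lambda>r. (a+r, 2*(q-r))) ` {..q}"
        obtain i j where e: "ij = (i,j)" by fastforce
        have "c i j = 0"
        proof (rule ccontr)
          assume "c i j \<noteq> 0"
          then have "a \<le> i" "i - a \<le> q" "j = 2*(q-(i-a))" unfolding c_def by (auto split: if_splits)
          then have "ij \<in> (\<lambda>r. (a+r, 2*(q-r))) ` {..q}" unfolding e by (auto intro!: image_eqI[of _ _ "i-a"])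
          then show False using ij by auto
        qed
        then show "(case ij of (i,j) \<Rightarrow> c i j * ?x^i * ?y^j * ?z^(k - i - j)) = 0" by (simp add: e)
      qed
    qed simp
    finally show ?thesis .
  qed
  then show ?thesis unfolding hpoly_def by blast
qed


lemma vs: "vector_space vf_scale"
  by unfold_locales (auto simp: vf_scale_def fun_eq_iff algebra_simps)

lemma sum_fun_apply': "(\<Sum>i\<in>A. f i) x = (\<Sum>i\<in>A. f i x)"
  by (induct A rule: infinite_finite_induct) auto

lemma ceil_half: "d \<ge> 1 \<Longrightarrow> nat \<lceil>real d / 2\<rceil> = (d - 1) div 2 + 1"
proof -
  assume "d \<ge> 1"
  define m where "m = (d - 1) div 2"
  have "d = 2*m+1 \<or> d = 2*m+2" unfolding m_def using \<open>d \<ge> 1\<close> by presburger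
  then have "\<lceil>real d / 2\<rceil> = int m + 1"
    by (intro ceiling_unique) auto
  then show ?thesis unfolding m_def by simp
qed

lemma card_Q: "card {q::nat. 2*q \<le> k} = k div 2 + 1"
proof -
  have "{q::nat. 2*q \<le> k} = {..k div 2}" by auto
  then show ?thesis by simp
qed


lemma delta2:
  fixes X B :: real
  assumes "P0 \<le> M" "q \<le> M"
  shows "(\<Sum>p\<le>M. \<Sum>j\<le>M. (if p = P0 \<and> j = q then 1 else 0) * X^p * B^j) = X^P0 * B^q"
proof -
  have "(\<Sum>j\<le>M. (if p = P0 \<and> j = q then 1 else 0) * X^p * B^j)
      = (if p = P0 then (\<Sum>j\<le>M. if j = q then X^p * B^j else 0) else 0)" for p
  proof (cases "p = P0")
    case True
    have "(\<Sum>j\<le>M. (if j = q then 1 else 0) * X^p * B^j) = (\<Sum>j\<le>M. if j = q then X^p * B^j else 0)"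
      by (rule sum.cong) auto
    then show ?thesis using True by simp
  qed simp
  then have "(\<Sum>p\<le>M. \<Sum>j\<le>M. (if p = P0 \<and> j = q then 1 else 0) * X^p * B^j)
      = (\<Sum>p\<le>M. if p = P0 then (\<Sum>j\<le>M. if j = q then X^p * B^j else 0) else 0)"
    by simp
  also have "\<dots> = X^P0 * B^q" using assms by (simp add: sum.delta)
  finally show ?thesis .
qed

lemma mem_S:
  "h \<in> {h. ad (transpose Nmat) h = (\<lambda>_. 0)} \<inter> U3 d \<longleftrightarrow>
   (\<exists>\<theta>\<in>hpoly (d - 1). h = (\<lambda>\<xi>. \<theta> \<xi> *\<^sub>R \<xi>) \<and> (\<forall>\<xi>. frechet_derivative \<theta> (at \<xi>) (transpose Nmat *v \<xi>) = 0))"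
proof -
  have "ad (transpose Nmat) (\<lambda>\<xi>. \<theta> \<xi> *\<^sub>R \<xi>) = (\<lambda>_. 0) \<longleftrightarrow> (\<forall>\<xi>. frechet_derivative \<theta> (at \<xi>) (transpose Nmat *v \<xi>) = 0)"
    if "\<theta> \<in> hpoly (d-1)" for \<theta>
    by (rule ad_zero_iff[OF hpoly_diff[OF that]])
  then show ?thesis unfolding U3_def by blast
qed

theorem lemma9:
  fixes d :: nat
  assumes "d \<ge> 1"
  shows "{h. ad (transpose Nmat) h = (\<lambda>_. 0)} \<inter> U3 d =
           {h. \<exists>\<theta>\<in>hpoly (d - 1).
                 (\<exists>(M::nat) (a::nat \<Rightarrow> nat \<Rightarrow> real). \<forall>\<xi>.
                    \<theta> \<xi> = (\<Sum>i\<le>M. \<Sum>j\<le>M. a i j * (\<xi>$1)^i * (beta \<xi>)^j))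
               \<and> h = (\<lambda>\<xi>. \<theta> \<xi> *\<^sub>R \<xi>)}
       \<and> vector_space.dim vf_scale ({h. ad (transpose Nmat) h = (\<lambda>_. 0)} \<inter> U3 d)
           = nat \<lceil>real d / 2\<rceil>"
proof
  let ?S = "{h. ad (transpose Nmat) h = (\<lambda>_. 0)} \<inter> U3 d"
  show "?S = {h. \<exists>\<theta>\<in>hpoly (d - 1).
                 (\<exists>(M::nat) (a::nat \<Rightarrow> nat \<Rightarrow> real). \<forall>\<xi>.
                    \<theta> \<xi> = (\<Sum>i\<le>M. \<Sum>j\<le>M. a i j * (\<xi>$1)^i * (beta \<xi>)^j))
               \<and> h = (\<lambda>\<xi>. \<theta> \<xi> *\<^sub>R \<xi>)}"
  proof (intro set_eqI iffI)
    fix h assume "h \<in> ?S"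
    then obtain \<theta> where th: "\<theta> \<in> hpoly (d-1)" "h = (\<lambda>\<xi>. \<theta> \<xi> *\<^sub>R \<xi>)"
      "\<forall>\<xi>. frechet_derivative \<theta> (at \<xi>) (transpose Nmat *v \<xi>) = 0" unfolding mem_S by blast
    obtain c where c: "\<theta> = (\<lambda>\<xi>. \<Sum>(i,j)\<in>{(i,j). i + j \<le> d-1}.
                c i j * (\<xi>$1)^i * (\<xi>$2)^j * (\<xi>$3)^(d - 1 - i - j))" using hpoly_eq[OF th(1)] by blast
    show "h \<in> {h. \<exists>\<theta>\<in>hpoly (d - 1).
                 (\<exists>(M::nat) (a::nat \<Rightarrow> nat \<Rightarrow> real). \<forall>\<xi>.
                    \<theta> \<xi> = (\<Sum>i\<le>M. \<Sum>j\<le>M. a i j * (\<xi>$1)^i * (beta \<xi>)^j))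
               \<and> h = (\<lambda>\<xi>. \<theta> \<xi> *\<^sub>R \<xi>)}"
    proof -
      have "\<exists>(M::nat) (a::nat \<Rightarrow> nat \<Rightarrow> real). \<forall>\<xi>.
                    \<theta> \<xi> = (\<Sum>i\<le>M. \<Sum>j\<le>M. a i j * (\<xi>$1)^i * (beta \<xi>)^j)"
        by (rule exI[of _ "d-1"], rule exI[of _ "\<lambda>p q. if p + 2*q = d-1 then c (d-1-q) 0 / 2^q else 0"])
          (use alpha_form[OF c th(3)] in blast)
      then show ?thesis using th by blast
    qed
  next
    fix h assume "h \<in> {h. \<exists>\<theta>\<in>hpoly (d - 1).
                 (\<exists>(M::nat) (a::nat \<Rightarrow> nat \<Rightarrow> real). \<forall>\<xi>.
                    \<theta> \<xi> = (\<Sum>i\<le>M. \<Sum>j\<le>M. a i j * (\<xi>$1)^i * (beta \<xi>)^j))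
               \<and> h = (\<lambda>\<xi>. \<theta> \<xi> *\<^sub>R \<xi>)}"
    then obtain \<theta> M a where "\<theta> \<in> hpoly (d-1)" "\<forall>\<xi>. \<theta> \<xi> = (\<Sum>i\<le>M. \<Sum>j\<le>M. a i j * (\<xi>$1)^i * (beta \<xi>)^j)"
      "h = (\<lambda>\<xi>. \<theta> \<xi> *\<^sub>R \<xi>)" by blast
    then show "h \<in> ?S" unfolding mem_S using rhs_kernel by blast
  qed
next
  let ?S = "{h. ad (transpose Nmat) h = (\<lambda>_. 0)} \<inter> U3 d"
  interpret V: vector_space vf_scale by (rule vs)
  define Q where "Q = {q. 2*q \<le> d-1}"
  define b where "b q = (\<lambda>\<xi>::real^3. ((\<xi>$1)^(d-1-2*q) * (beta \<xi>)^q) *\<^sub>R \<xi>)" for q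
  have finQ: "finite Q" unfolding Q_def by (rule finite_subset[of _ "{..d-1}"]) auto
  have bS: "b q \<in> ?S" if q: "q \<in> Q" for q
  proof -
    have hp: "(\<lambda>\<xi>. (\<xi>$1)^(d-1-2*q) * (beta \<xi>)^q) \<in> hpoly (d-1)"
      by (rule hpoly_mon) (use q in \<open>auto simp: Q_def\<close>)
    have eq: "\<forall>\<xi>. (\<xi>$1)^(d-1-2*q) * (beta \<xi>)^q = (\<Sum>p\<le>d-1. \<Sum>j\<le>d-1.
        (if p = d-1-2*q \<and> j = q then 1 else 0) * (\<xi>$1)^p * (beta \<xi>)^j)"
      using q by (subst delta2) (auto simp: Q_def)
    have "\<forall>\<xi>. frechet_derivative (\<lambda>\<xi>. (\<xi>$1)^(d-1-2*q) * (beta \<xi>)^q) (at \<xi>) (transpose Nmat *v \<xi>) = 0"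
      using rhs_kernel[OF eq] by blast
    then show ?thesis unfolding mem_S b_def by (intro bexI[OF _ hp] conjI refl)
  qed
  have Sspan: "?S \<subseteq> V.span (b ` Q)"
  proof
    fix h assume "h \<in> ?S"
    then obtain \<theta> where th: "\<theta> \<in> hpoly (d-1)" "h = (\<lambda>\<xi>. \<theta> \<xi> *\<^sub>R \<xi>)"
      "\<forall>\<xi>. frechet_derivative \<theta> (at \<xi>) (transpose Nmat *v \<xi>) = 0" unfolding mem_S by blast
    obtain c where c: "\<theta> = (\<lambda>\<xi>. \<Sum>(i,j)\<in>{(i,j). i + j \<le> d-1}.
                c i j * (\<xi>$1)^i * (\<xi>$2)^j * (\<xi>$3)^(d - 1 - i - j))" using hpoly_eq[OF th(1)] by blast
    define \<alpha> where "\<alpha> q = c (d-1-q) 0 / 2^q" for q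
    have Qe: "Q = {q\<in>{..d-1}. 2*q \<le> d-1}" unfolding Q_def by auto
    have "\<theta> \<xi> = (\<Sum>q\<in>Q. \<alpha> q * ((\<xi>$1)^(d-1-2*q) * (beta \<xi>)^q))" for \<xi>
      unfolding alpha_form[OF c th(3), of \<xi>] form_conv Qe
      by (subst sum.inter_filter) (auto simp: \<alpha>_def intro!: sum.cong)
    then have "h = (\<Sum>q\<in>Q. vf_scale (\<alpha> q) (b q))"
      unfolding th(2) by (auto simp: fun_eq_iff sum_fun_apply' vf_scale_def b_def scaleR_sum_left)
    also have "\<dots> \<in> V.span (b ` Q)"
      by (intro V.span_sum V.span_scale V.span_base) auto
    finally show "h \<in> V.span (b ` Q)" .
  qed
  have ev: "b q (\<chi> i. if i = 1 then 1 else if i = 2 then 0 else z) $ 1 = (2*z)^q" for q z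
    by (simp add: b_def beta_def)
  have inj: "inj_on b Q"
  proof
    fix q q' assume "q \<in> Q" "q' \<in> Q" "b q = b q'"
    then have "b q (\<chi> i. if i = 1 then 1 else if i = 2 then 0 else 1) $ 1 = b q' (\<chi> i. if i = 1 then 1 else if i = 2 then 0 else 1) $ 1"
      by simp
    then have "(2*1::real)^q = (2*1)^q'" unfolding ev .
    then show "q = q'" by simp
  qed
  have finB: "finite (b ` Q)" using finQ by simp
  have expl: "\<forall>u. (\<Sum>v\<in>b ` Q. vf_scale (u v) v) = 0 \<longrightarrow> (\<forall>v\<in>b ` Q. u v = 0)"
  proof (intro allI impI ballI)
    fix u v assume u: "(\<Sum>v\<in>b ` Q. vf_scale (u v) v) = 0" and v: "v \<in> b ` Q"
    have u': "(\<Sum>q\<in>Q. vf_scale (u (b q)) (b q)) = 0" using u unfolding sum.reindex[OF inj] by simp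
    have "(\<Sum>q\<le>d-1. (if q \<in> Q then u (b q) * 2^q else 0) * z^q) = 0" for z :: real
    proof -
      have "0 = (\<Sum>q\<in>Q. vf_scale (u (b q)) (b q)) (\<chi> i. if i = 1 then 1 else if i = 2 then 0 else z) $ 1"
        unfolding u' by simp
      also have "\<dots> = (\<Sum>q\<in>Q. u (b q) * (2*z)^q)"
        by (simp add: sum_fun_apply' vf_scale_def ev)
      also have "\<dots> = (\<Sum>q\<le>d-1. (if q \<in> Q then u (b q) * 2^q else 0) * z^q)"
        by (rule sum.mono_neutral_cong_left) (auto simp: Q_def power_mult_distrib)
      finally show ?thesis by simp
    qed
    then have "\<forall>q\<le>d-1. (if q \<in> Q then u (b q) * 2^q else 0) = 0"
      using polyfun_eq_0[of "\<lambda>q. if q \<in> Q then u (b q) * 2^q else 0" "d-1"] by blast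
    then have "\<forall>q\<in>Q. u (b q) = 0"
    proof (intro ballI)
      fix q assume q: "q \<in> Q"
      assume h: "\<forall>q\<le>d-1. (if q \<in> Q then u (b q) * 2^q else 0) = 0"
      have "q \<le> d-1" using q unfolding Q_def by simp
      then have "u (b q) * 2^q = 0" using h q by auto
      then show "u (b q) = 0" by simp
    qed
    moreover from v obtain q where "q \<in> Q" "v = b q" by blast
    ultimately show "u v = 0" by simp
  qed
  have indep: "V.independent (b ` Q)"
    using V.dependent_finite[OF finB] expl by blast
  have "V.span (b ` Q) = V.span ?S"
  proof
    have B_S: "b ` Q \<subseteq> ?S" using bS by blast
    show "V.span (b ` Q) \<subseteq> V.span ?S" by (rule V.span_mono[OF B_S])
    have "V.span ?S \<subseteq> V.span (V.span (b ` Q))" by (rule V.span_mono[OF Sspan])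
    then show "V.span ?S \<subseteq> V.span (b ` Q)" by (simp only: V.span_span)
  qed
  then have "V.dim ?S = card (b ` Q)" by (rule V.dim_eq_card[OF _ indep])
  also have "\<dots> = card Q" by (rule card_image[OF inj])
  also have "\<dots> = nat \<lceil>real d / 2\<rceil>" unfolding Q_def card_Q ceil_half[OF assms] ..
  finally show "V.dim ?S = nat \<lceil>real d / 2\<rceil>" .
qed

end
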